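(* Let $\ell\ge1$ and let $C=(w_1,\dots,w_{2\ell+1})$ be a semi-valid tuple in $\Omega_n$ which is not $(i,2\ell+1)$-consecutive for any $i$. Then there exist $i$ and $k$ with $1\le k\le\ell$ such that $C$ is $(i,k)$-consecutive and both $C_{i,k,-1}$ and $C_{i,k,1}$ are semi-valid.
   Context: $\Omega_n=\{v_0,\dots,v_{n-1}\}$ with cyclic order $v_0<\dots<v_{n-1}<v_0$, indices of $v$ mod $n$. A tuple $C=(w_1,\dots,w_{2\ell+1})$ of distinct vertices is semi-valid if $w_1<w_3<\dots<w_{2\ell+1}<w_2<w_4<\dots<w_{2\ell}<w_1$ in clockwise cyclic order; indices of the $w$'s are mod $2\ell+1$. $C$ is $(i,k)$-consecutive if there is $j$ with $w_{i+2s}=v_{j+s}$ for all $0\le s<k$. In that case, for an integer $m$, $C_{i,k,m}$ is the tuple obtained from $C$ by replacing $w_{i+2s}$ with $v_{j+s+m}$ for $0\le s<k$ and keeping all other entries. *)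

theory Defs
  imports Main
begin

text \<open>Vertices of Omega_n: v_j is encoded as the integer j mod n in {0..<n}; clockwise
  order is increasing order of these labels (cyclically).
  A tuple (w_1,...,w_m), m = 2l+1, is encoded as a function w :: int => int; the entry
  w_q (paper index q, taken mod m) is  w (q mod m).  Only the values on {0..<m} matter.\<close>

definition semi_valid :: "int \<Rightarrow> int \<Rightarrow> (int \<Rightarrow> int) \<Rightarrow> bool" where
  "semi_valid n m w \<longleftrightarrow>
     (\<forall>p\<in>{0..<m}. 0 \<le> w p \<and> w p < n) \<and>
     inj_on w {0..<m} \<and>
     (\<exists>r. \<forall>t\<in>{0..<m-1}.
          w ((1 + 2*(r+t)) mod m) < w ((1 + 2*(r+t+1)) mod m))"

definition consecutive :: "int \<Rightarrow> int \<Rightarrow> (int \<Rightarrow> int) \<Rightarrow> int \<Rightarrow> int \<Rightarrow> bool" where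
  "consecutive n m w i k \<longleftrightarrow>
     (\<exists>j. \<forall>s\<in>{0..<k}. w ((i + 2*s) mod m) = (j + s) mod n)"

text \<open>C_{i,k,d}: entries w_{i+2s} = v_{j+s} (0 <= s < k) are replaced by v_{j+s+d},
  i.e. by (w_{i+2s} + d) mod n; all other entries are kept.\<close>
definition shifted :: "int \<Rightarrow> int \<Rightarrow> (int \<Rightarrow> int) \<Rightarrow> int \<Rightarrow> int \<Rightarrow> int \<Rightarrow> (int \<Rightarrow> int)" where
  "shifted n m w i k d = (\<lambda>p. if \<exists>s\<in>{0..<k}. p = (i + 2*s) mod m
                               then (w p + d) mod n else w p)"

end

theory Submission
  imports Defs
begin

definition U :: "int \<Rightarrow> (int \<Rightarrow> int) \<Rightarrow> int \<Rightarrow> int" where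
  "U m w t = w ((1 + 2*t) mod m)"

definition cyc :: "int \<Rightarrow> int \<Rightarrow> (int \<Rightarrow> int) \<Rightarrow> bool" where
  "cyc n m f \<longleftrightarrow> (\<forall>t. 0 \<le> f t \<and> f t < n) \<and> (\<forall>a b. f a = f b \<longleftrightarrow> a mod m = b mod m)
     \<and> (\<exists>r. \<forall>t\<in>{0..<m-1}. f (r+t) < f (r+t+1))"

lemma chain_mono:
  fixes v :: "int \<Rightarrow> int"
  assumes ch: "\<forall>t\<in>{0..<m-1}. v t < v (t+1)" and "0 \<le> x" "x < y" "y < m"
  shows "v x < v y"
proof -
  have "\<forall>x. 0 \<le> x \<longrightarrow> x + int d + 1 < m \<longrightarrow> v x < v (x + int d + 1)" for d :: nat
  proof (induction d)
    case 0 then show ?case using ch by auto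
  next
    case (Suc d)
    show ?case
    proof (intro allI impI)
      fix x assume h: "0 \<le> x" "x + int (Suc d) + 1 < m"
      have mem: "x + int d + 1 \<in> {0..<m-1}" using h by auto
      have "v x < v (x + int d + 1)" using Suc h by auto
      also have "v (x + int d + 1) < v (x + int d + 1 + 1)" using ch mem by blast
      finally have "v x < v (x + int d + 1 + 1)" .
      moreover have "x + int d + 1 + 1 = x + int (Suc d) + 1" by simp
      ultimately show "v x < v (x + int (Suc d) + 1)" by metis
    qed
  qed
  from this[of "nat (y - x - 1)"] assms show ?thesis by auto
qed

lemma inj2:
  fixes m a b :: int
  assumes "odd m" "(1 + 2*a) mod m = (1 + 2*b) mod m"
  shows "a mod m = b mod m"
proof -
  have "m dvd (1+2*a) - (1+2*b)" using assms(2) by (simp add: mod_eq_dvd_iff)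
  moreover have "(1+2*a) - (1+2*b) = (a-b)*2" by (simp add: algebra_simps)
  ultimately have "m dvd (a-b)*2" by metis
  moreover have "coprime m 2" using assms(1) by (simp add: coprime_commute)
  ultimately have "m dvd a - b" using coprime_dvd_mult_left_iff by blast
  thus ?thesis by (simp add: mod_eq_dvd_iff)
qed

lemma surj2:
  fixes l p :: int
  assumes "0 \<le> p" "p < 2*l+1"
  shows "p = (1 + 2*((p-1)*(l+1))) mod (2*l+1)"
proof -
  have "1 + 2*((p-1)*(l+1)) = p + (p-1)*(2*l+1)" by (simp add: algebra_simps)
  hence "(1 + 2*((p-1)*(l+1))) mod (2*l+1) = p mod (2*l+1)" by simp
  thus ?thesis using assms by simp
qed

lemma cong_mod: "a mod m = b mod m \<Longrightarrow> (1 + 2*a) mod m = (1 + 2*(b::int)) mod m"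
  by (metis mod_add_right_eq mod_mult_right_eq)

lemma sv_iff:
  fixes l :: int assumes l: "l \<ge> 0"
  shows "semi_valid n (2*l+1) w \<longleftrightarrow> cyc n (2*l+1) (U (2*l+1) w)"
proof -
  let ?m = "2*l+1"
  have odd: "odd ?m" by simp
  have mp: "?m > 0" using l by simp
  have rng: "(1+2*t) mod ?m \<in> {0..<?m}" for t using pos_mod_bound[OF mp, of "1+2*t"] pos_mod_sign[OF mp, of "1+2*t"] by auto
  show ?thesis
  proof
    assume sv: "semi_valid n ?m w"
    have r1: "\<forall>t. 0 \<le> U ?m w t \<and> U ?m w t < n" using sv rng unfolding semi_valid_def U_def by blast
    have r2: "U ?m w a = U ?m w b \<longleftrightarrow> a mod ?m = b mod ?m" for a b
    proof
      assume "U ?m w a = U ?m w b"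
      hence "(1+2*a) mod ?m = (1+2*b) mod ?m" using sv rng unfolding semi_valid_def U_def inj_on_def by blast
      thus "a mod ?m = b mod ?m" using inj2 odd by blast
    next
      assume "a mod ?m = b mod ?m" thus "U ?m w a = U ?m w b" unfolding U_def using cong_mod by metis
    qed
    show "cyc n ?m (U ?m w)" unfolding cyc_def using r1 r2 sv unfolding semi_valid_def U_def by blast
  next
    assume c: "cyc n ?m (U ?m w)"
    have sp: "\<exists>x. p = (1+2*x) mod ?m" if "p \<in> {0..<?m}" for p using surj2 that by auto
    have a1: "\<forall>p\<in>{0..<?m}. 0 \<le> w p \<and> w p < n"
      using c sp unfolding cyc_def U_def by metis
    have a2: "inj_on w {0..<?m}"
    proof (rule inj_onI)
      fix p q assume p: "p \<in> {0..<?m}" and q: "q \<in> {0..<?m}" and e: "w p = w q"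
      obtain x where x: "p = (1+2*x) mod ?m" using sp p by blast
      obtain y where y: "q = (1+2*y) mod ?m" using sp q by blast
      have "U ?m w x = U ?m w y" using e x y unfolding U_def by simp
      hence "x mod ?m = y mod ?m" using c unfolding cyc_def by blast
      thus "p = q" using x y cong_mod by metis
    qed
    show "semi_valid n ?m w" unfolding semi_valid_def using a1 a2 c unfolding cyc_def U_def by blast
  qed
qed

lemma chain_mono_le:
  fixes v :: "int \<Rightarrow> int"
  assumes ch: "\<forall>t\<in>{0..<m-1}. v t < v (t+1)" and "0 \<le> x" "x \<le> y" "y < m"
  shows "v x \<le> v y"
  using chain_mono[OF ch, of x y] assms by (cases "x = y") auto

lemma cyc_rng: "cyc n m f \<Longrightarrow> 0 \<le> f t \<and> f t < n"
  unfolding cyc_def by blast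

lemma cyc_eq: "cyc n m f \<Longrightarrow> a mod m = b mod m \<Longrightarrow> f a = f b"
  unfolding cyc_def by blast

lemma cyc_eq2: "cyc n m f \<Longrightarrow> f a = f b \<Longrightarrow> a mod m = b mod m"
  unfolding cyc_def by blast

lemma cyc_npos: "cyc n m f \<Longrightarrow> n > 0"
  using cyc_rng[of n m f 0] by linarith

lemma mod1_eq:
  fixes x y n :: int
  assumes "0 \<le> x" "x < n" "0 \<le> y" "y < n" "(x+1) mod n = (y+1) mod n"
  shows "x = y"
proof -
  have "n dvd (x+1) - (y+1)" using assms(5) by (simp add: mod_eq_dvd_iff)
  hence "x mod n = y mod n" by (simp add: mod_eq_dvd_iff)
  thus ?thesis using assms by simp
qed

lemma rot1:
  assumes c: "cyc n m f" and mp: "m > 0"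
  shows "cyc n m (\<lambda>t. (f t + 1) mod n)"
proof -
  have np: "n > 0" using cyc_npos[OF c] .
  have rg: "0 \<le> f t \<and> f t < n" for t using cyc_rng[OF c] .
  obtain r where ch: "\<forall>t\<in>{0..<m-1}. f (r+t) < f (r+t+1)" using c unfolding cyc_def by blast
  let ?v = "\<lambda>z. f (r+z)"
  have chv: "\<forall>t\<in>{0..<m-1}. ?v t < ?v (t+1)" using ch by (simp add: add.assoc)
  have A: "\<forall>t. 0 \<le> (f t + 1) mod n \<and> (f t + 1) mod n < n" using np by simp
  have B: "\<forall>a b. (f a + 1) mod n = (f b + 1) mod n \<longleftrightarrow> a mod m = b mod m"
  proof (intro allI)
    fix a b
    have "(f a + 1) mod n = (f b + 1) mod n \<longleftrightarrow> f a = f b"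
      using mod1_eq[of "f a" n "f b"] rg by metis
    also have "\<dots> \<longleftrightarrow> a mod m = b mod m" using c unfolding cyc_def by blast
    finally show "(f a + 1) mod n = (f b + 1) mod n \<longleftrightarrow> a mod m = b mod m" .
  qed
  have C: "\<exists>r. \<forall>t\<in>{0..<m-1}. (f (r+t) + 1) mod n < (f (r+t+1) + 1) mod n"
  proof (cases "\<exists>a. f a = n - 1")
    case False
    hence "f t + 1 < n" for t using rg[of t] by (smt (verit))
    hence "(f t + 1) mod n = f t + 1" for t using rg[of t] by simp
    hence md: "(f t + 1) mod n = f t + 1" for t by blast
    have "\<forall>t\<in>{0..<m-1}. (f (r+t) + 1) mod n < (f (r+t+1) + 1) mod n"
    proof
      fix t assume t: "t \<in> {0..<m-1}"
      have "f (r+t) < f (r+t+1)" using ch t by blast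
      thus "(f (r+t) + 1) mod n < (f (r+t+1) + 1) mod n" using md[of "r+t"] md[of "r+t+1"] by linarith
    qed
    thus ?thesis by blast
  next
    case True
    then obtain a where fa: "f a = n - 1" by blast
    define x where "x = (a - r) mod m"
    have x0: "0 \<le> x" "x < m" unfolding x_def using mp by auto
    have "(r + x) mod m = a mod m" unfolding x_def by (simp add: mod_add_right_eq)
    hence fx: "f (r + x) = n - 1" using cyc_eq[OF c] fa by metis
    have xm: "x = m - 1"
    proof (rule ccontr)
      assume "x \<noteq> m - 1"
      hence "x \<in> {0..<m-1}" using x0 by auto
      hence "f (r+x) < f (r+x+1)" using ch by blast
      thus False using fx rg[of "r+x+1"] by linarith
    qed
    show ?thesis
    proof (intro exI ballI)
      fix t assume t: "t \<in> {0..<m-1}"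
      show "(f (r + (m-1) + t) + 1) mod n < (f (r + (m-1) + t + 1) + 1) mod n"
      proof (cases "t = 0")
        case True
        have e1: "f (r + (m-1) + t) = n - 1" using fx xm True by simp
        have "(r + (m-1) + t + 1) mod m = r mod m" using True by simp
        hence e2: "f (r + (m-1) + t + 1) = f r" using cyc_eq[OF c] by blast
        have "?v 0 < ?v (m-1)" using chain_mono[OF chv, of 0 "m-1"] t by auto
        hence "f r < n - 1" using fx xm by simp
        hence "(f r + 1) mod n = f r + 1" using rg[of r] by simp
        thus ?thesis using e1 e2 rg[of r] by simp
      next
        case False
        have "(r + (m-1) + t) mod m = (r + (t-1)) mod m"
        proof -
          have "r + (m-1) + t = (r + (t-1)) + m" by simp
          thus ?thesis by (metis mod_add_self2)
        qed
        hence e1: "f (r + (m-1) + t) = ?v (t-1)" using cyc_eq[OF c] by blast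
        have "(r + (m-1) + t + 1) mod m = (r + t) mod m"
        proof -
          have "r + (m-1) + t + 1 = (r + t) + m" by simp
          thus ?thesis by (metis mod_add_self2)
        qed
        hence e2: "f (r + (m-1) + t + 1) = ?v t" using cyc_eq[OF c] by blast
        have l1: "?v (t-1) < ?v t" using chain_mono[OF chv, of "t-1" t] t False by auto
        have l2: "?v t < ?v (m-1)" using chain_mono[OF chv, of t "m-1"] t by auto
        have "?v (m-1) = n - 1" using fx xm by simp
        hence "(?v (t-1) + 1) mod n = ?v (t-1) + 1" "(?v t + 1) mod n = ?v t + 1"
          using l1 l2 rg[of "r+(t-1)"] rg[of "r+t"] by auto
        thus ?thesis using e1 e2 l1 by simp
      qed
    qed
  qed
  show ?thesis unfolding cyc_def using A B C by blast
qed

lemma rotN: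
  assumes c: "cyc n m f" and mp: "m > 0"
  shows "cyc n m (\<lambda>t. (f t + int N) mod n)"
proof (induction N)
  case 0
  have "(\<lambda>t. (f t + int 0) mod n) = f" using cyc_rng[OF c] by (auto intro!: ext)
  thus ?case using c by simp
next
  case (Suc N)
  have "(\<lambda>t. ((f t + int N) mod n + 1) mod n) = (\<lambda>t. (f t + int (Suc N)) mod n)"
    by (auto intro!: ext simp: mod_add_right_eq ac_simps)
  thus ?case using rot1[OF Suc mp] by simp
qed

lemma rot:
  assumes c: "cyc n m f" and mp: "m > 0"
  shows "cyc n m (\<lambda>t. (f t + c) mod n)"
proof -
  have np: "n > 0" using cyc_npos[OF c] .
  have e: "int (nat (c mod n)) = c mod n" using np by simp
  have "cyc n m (\<lambda>t. (f t + c mod n) mod n)" using rotN[OF c mp, of "nat (c mod n)"] unfolding e .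
  moreover have "(\<lambda>t. (f t + c mod n) mod n) = (\<lambda>t. (f t + c) mod n)"
    by (auto intro!: ext simp: mod_add_right_eq)
  ultimately show ?thesis by simp
qed

lemma succ:
  assumes c: "cyc n m f" and mp: "m > 0" and fa: "f a = (f t + 1) mod n"
  shows "f (t+1) = (f t + 1) mod n"
proof -
  have np: "n > 0" using cyc_npos[OF c] .
  have rg: "0 \<le> f z \<and> f z < n" for z using cyc_rng[OF c] .
  obtain r where ch: "\<forall>t\<in>{0..<m-1}. f (r+t) < f (r+t+1)" using c unfolding cyc_def by blast
  let ?v = "\<lambda>z. f (r+z)"
  have chv: "\<forall>t\<in>{0..<m-1}. ?v t < ?v (t+1)" using ch by (simp add: add.assoc)
  define x where "x = (t - r) mod m"
  define y where "y = (a - r) mod m"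
  have x0: "0 \<le> x" "x < m" unfolding x_def using mp by auto
  have y0: "0 \<le> y" "y < m" unfolding y_def using mp by auto
  have rx: "(r + x) mod m = t mod m" unfolding x_def by (simp add: mod_add_right_eq)
  hence ft: "f t = ?v x" using cyc_eq[OF c] by metis
  have "(r + y) mod m = a mod m" unfolding y_def by (simp add: mod_add_right_eq)
  hence fa': "f a = ?v y" using cyc_eq[OF c] by metis
  have rx1: "(r + x + 1) mod m = (t + 1) mod m"
  proof -
    have "(r + x + 1) mod m = ((r + x) mod m + 1) mod m" by (rule mod_add_left_eq[symmetric])
    also have "\<dots> = (t mod m + 1) mod m" using rx by simp
    also have "\<dots> = (t + 1) mod m" by (rule mod_add_left_eq)
    finally show ?thesis .
  qed
  show ?thesis
  proof (cases "x < m - 1")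
    case True
    have "(r + (x+1)) mod m = (t+1) mod m" using rx1 by (simp only: add.assoc)
    hence ft1: "f (t+1) = ?v (x+1)" using cyc_eq[OF c] by metis
    have lt: "?v x < ?v (x+1)" using chv True x0 by auto
    show ?thesis
    proof (cases "?v x + 1 < n")
      case True2: True
      hence vy: "?v y = ?v x + 1" using fa fa' ft rg[of t] by simp
      have "\<not> y \<le> x" using chain_mono_le[OF chv, of y x] y0 x0 vy by auto
      hence "x + 1 \<le> y" by simp
      hence "?v (x+1) \<le> ?v y" using chain_mono_le[OF chv, of "x+1" y] y0 x0 by auto
      moreover have "(?v x + 1) mod n = ?v x + 1" using True2 rg[of "r+x"] by simp
      ultimately have "f (t+1) = ?v x + 1" using vy lt ft ft1 by linarith
      thus ?thesis using ft True2 rg[of "r+x"] by simp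
    next
      case False
      thus ?thesis using lt rg[of "r+(x+1)"] by simp
    qed
  next
    case False
    hence xm: "x = m - 1" using x0 by simp
    have "(t + 1) mod m = (r + x + 1) mod m" using rx1 by simp
    also have "\<dots> = r mod m" using xm by simp
    finally have "(t+1) mod m = (r+0) mod m" by simp
    hence ft1: "f (t+1) = ?v 0" by (rule cyc_eq[OF c])
    show ?thesis
    proof (cases "?v x + 1 < n")
      case True
      hence vy: "?v y = ?v x + 1" using fa fa' ft rg[of t] by simp
      thus ?thesis using chain_mono_le[OF chv, of y x] y0 x0 xm by auto
    next
      case False
      hence vx: "?v x = n - 1" using rg[of "r+x"] by simp
      hence "?v y = 0" using fa fa' ft by simp
      moreover have "?v 0 \<le> ?v y" using chain_mono_le[OF chv, of 0 y] y0 by auto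
      ultimately have "?v 0 = 0" using rg[of r] by simp
      thus ?thesis using ft1 ft vx by simp
    qed
  qed
qed

lemma run:
  fixes f :: "int \<Rightarrow> int" and t0 K n :: int
  assumes ng: "\<forall>s\<in>{0..<K-1}. f (t0+s+1) = (f (t0+s) + 1) mod n"
    and rg: "\<forall>z. 0 \<le> f z \<and> f z < n"
  shows "\<forall>s\<in>{0..<K}. f (t0+s) = (f t0 + s) mod n"
proof -
  have "f (t0 + int s') = (f t0 + int s') mod n \<or> int s' \<ge> K" for s'::nat
  proof (induction s')
    case 0 then show ?case using rg by simp
  next
    case (Suc s')
    show ?case
    proof (cases "int (Suc s') \<ge> K")
      case True then show ?thesis by blast
    next
      case False
      hence "int s' \<in> {0..<K-1}" by simp
      hence "f (t0 + int s' + 1) = (f (t0 + int s') + 1) mod n" using ng by blast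
      also have "\<dots> = ((f t0 + int s') mod n + 1) mod n" using Suc False by simp
      also have "\<dots> = (f t0 + int s' + 1) mod n" by (rule mod_add_left_eq)
      also have "\<dots> = (f t0 + int (Suc s')) mod n"
      proof -
        have "int (Suc s') = int s' + 1" by simp
        thus ?thesis by (simp only: add.assoc)
      qed
      finally have "f (t0 + int s' + 1) = (f t0 + int (Suc s')) mod n" .
      moreover have "t0 + int s' + 1 = t0 + int (Suc s')" by simp
      ultimately show ?thesis by metis
    qed
  qed
  thus ?thesis by (metis atLeastLessThan_iff linorder_not_le nonneg_int_cases)
qed

lemma gaps:
  fixes G :: "int \<Rightarrow> bool" and l :: int
  assumes l: "l \<ge> 1" and per: "\<forall>t. G (t + (2*l+1)) = G t"
    and nc: "\<forall>t0. \<not> (\<forall>s\<in>{0..<2*l}. \<not> G (t0+s))"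
  shows "\<exists>t0 k. 1 \<le> k \<and> k \<le> l \<and> G (t0 - 1) \<and> G (t0 + k - 1) \<and> (\<forall>s\<in>{0..<k-1}. \<not> G (t0+s))"
proof -
  obtain a where Ga: "G a" using nc by blast
  define X where "X = {t \<in> {a<..<a+2*l+1}. G t}"
  have fin: "finite X" unfolding X_def by (rule finite_subset[of _ "{a<..<a+2*l+1}"]) auto
  have ne: "X \<noteq> {}"
  proof
    assume e: "X = {}"
    have "\<forall>s\<in>{0..<2*l}. \<not> G (a+1+s)"
    proof
      fix s assume "s \<in> {0..<2*l}"
      hence "a+1+s \<in> {a<..<a+2*l+1}" by auto
      thus "\<not> G (a+1+s)" using e unfolding X_def by blast
    qed
    thus False using nc by blast
  qed
  define b where "b = Min X"
  define c where "c = Max X"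
  have bX: "b \<in> X" unfolding b_def using fin ne by simp
  have cX: "c \<in> X" unfolding c_def using fin ne by simp
  have bmin: "\<And>t. t \<in> X \<Longrightarrow> b \<le> t" unfolding b_def using fin by simp
  have cmax: "\<And>t. t \<in> X \<Longrightarrow> t \<le> c" unfolding c_def using fin by simp
  show ?thesis
  proof (cases "b - a \<le> l")
    case True
    show ?thesis
    proof (intro exI conjI)
      show "1 \<le> b - a" using bX unfolding X_def by auto
      show "b - a \<le> l" by fact
      show "G (a + 1 - 1)" using Ga by simp
      show "G (a + 1 + (b - a) - 1)" using bX unfolding X_def by simp
      show "\<forall>s\<in>{0..<b - a - 1}. \<not> G (a + 1 + s)"
      proof
        fix s assume s: "s \<in> {0..<b - a - 1}"
        show "\<not> G (a + 1 + s)"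
        proof
          assume "G (a+1+s)"
          hence "a+1+s \<in> X" using s bX unfolding X_def by auto
          thus False using bmin s by fastforce
        qed
      qed
    qed
  next
    case False
    have cb: "b \<le> c" using cmax bX by simp
    show ?thesis
    proof (intro exI conjI)
      show "1 \<le> a + (2*l+1) - c" using cX unfolding X_def by auto
      show "a + (2*l+1) - c \<le> l" using False cb by simp
      show "G (c + 1 - 1)" using cX unfolding X_def by simp
      have "c + 1 + (a + (2*l+1) - c) - 1 = a + (2*l+1)" by simp
      thus "G (c + 1 + (a + (2*l+1) - c) - 1)" using Ga per by metis
      show "\<forall>s\<in>{0..<a + (2*l+1) - c - 1}. \<not> G (c + 1 + s)"
      proof
        fix s assume s: "s \<in> {0..<a + (2*l+1) - c - 1}"
        show "\<not> G (c + 1 + s)"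
        proof
          assume "G (c+1+s)"
          hence "c+1+s \<in> X" using s cX unfolding X_def by auto
          thus False using cmax s by fastforce
        qed
      qed
    qed
  qed
qed

lemma shift_ok:
  fixes f :: "int \<Rightarrow> int" and n m t0 k d :: int
  assumes c: "cyc n m f" and mp: "m > 0" and k: "1 \<le> k" "k \<le> m - 1"
    and blk: "\<forall>s\<in>{0..<k}. f (t0+s) = s+1"
    and n0: "\<forall>a. f a \<noteq> 0" and nk: "\<forall>a. f a \<noteq> k+1" and d: "-1 \<le> d" "d \<le> 1"
  shows "cyc n m (\<lambda>t. if (t - t0) mod m < k then (f t + d) mod n else f t)"
proof -
  define g where "g = (\<lambda>t. if (t - t0) mod m < k then (f t + d) mod n else f t)"
  have np: "n > 0" using cyc_npos[OF c] .
  have rg: "0 \<le> f z \<and> f z < n" for z using cyc_rng[OF c] .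
  obtain r where ch: "\<forall>t\<in>{0..<m-1}. f (r+t) < f (r+t+1)" using c unfolding cyc_def by blast
  let ?v = "\<lambda>z. f (r+z)"
  have chv: "\<forall>t\<in>{0..<m-1}. ?v t < ?v (t+1)" using ch by (simp add: add.assoc)
  define x where "x = (t0 - r) mod m"
  have x0: "0 \<le> x" "x < m" unfolding x_def using mp by auto
  have "(r + x) mod m = t0 mod m" unfolding x_def by (simp add: mod_add_right_eq)
  hence ft0: "f t0 = ?v x" using cyc_eq[OF c] by metis
  have "0 \<in> {0..<k}" using k by simp
  hence "f (t0+0) = 0+1" using blk by blast
  hence f1: "f t0 = 1" by simp
  have "x = 0"
  proof (rule ccontr)
    assume "x \<noteq> 0"
    hence "?v 0 < ?v x" using chain_mono[OF chv, of 0 x] x0 by auto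
    moreover have "f r \<noteq> 0" using n0 by blast
    ultimately show False using ft0 f1 rg[of r] by simp
  qed
  hence tr: "t0 mod m = r mod m" using \<open>(r + x) mod m = t0 mod m\<close> by simp
  have fr: "f (t0 + t) = f (r + t)" for t
  proof (rule cyc_eq[OF c])
    show "(t0 + t) mod m = (r + t) mod m" using tr by (metis mod_add_left_eq)
  qed
  have ch0: "\<forall>t\<in>{0..<m-1}. f (t0+t) < f (t0+t+1)"
  proof
    fix t assume "t \<in> {0..<m-1}"
    hence "f (r+t) < f (r+t+1)" using ch by blast
    moreover have "f (t0+t+1) = f (r+t+1)" using fr[of "t+1"] by (simp only: add.assoc)
    ultimately show "f (t0+t) < f (t0+t+1)" using fr[of t] by simp
  qed
  have "k - 1 \<in> {0..<k}" using k by simp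
  hence "f (t0 + (k-1)) = k - 1 + 1" using blk by blast
  hence fkm1: "f (t0 + (k-1)) = k" by simp
  have "k - 1 \<in> {0..<m-1}" using k by auto
  hence "f (t0 + (k-1)) < f (t0 + (k-1) + 1)" using ch0 by blast
  hence "f (t0 + k) > k" using fkm1 by simp
  moreover have "f (t0 + k) \<noteq> k + 1" using nk by blast
  ultimately have fk: "f (t0 + k) \<ge> k + 2" by linarith
  have nbig: "k + 2 < n" using fk rg[of "t0+k"] by linarith
  define h where "h = (\<lambda>x. g (t0 + x))"
  have hx: "h x = (if x < k then x + 1 + d else f (t0 + x))" if "0 \<le> x" "x < m" for x
  proof -
    have e: "(t0 + x - t0) mod m = x" using that by simp
    show ?thesis
    proof (cases "x < k")
      case True
      have "f (t0 + x) = x + 1" using blk True that by simp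
      moreover have "0 \<le> x + 1 + d" "x + 1 + d < n" using d True that nbig by auto
      ultimately show ?thesis unfolding h_def g_def using e True by simp
    qed (unfold h_def g_def, use e in simp)
  qed
  have hch: "\<forall>x\<in>{0..<m-1}. h x < h (x+1)"
  proof
    fix y assume y: "y \<in> {0..<m-1}"
    show "h y < h (y+1)"
    proof (cases "y + 1 < k")
      case True thus ?thesis using hx[of y] hx[of "y+1"] y by auto
    next
      case False
      show ?thesis
      proof (cases "y + 1 = k")
        case True
        thus ?thesis using hx[of y] hx[of "y+1"] y fk d by auto
      next
        case False
        hence "h y = f (t0 + y)" "h (y+1) = f (t0 + y + 1)" using hx[of y] hx[of "y+1"] y \<open>\<not> y + 1 < k\<close> by (auto simp: add.assoc)
        thus ?thesis using ch0 y by simp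
      qed
    qed
  qed
  have gh: "g a = h ((a - t0) mod m)" for a
  proof -
    have e1: "(t0 + (a - t0) mod m - t0) mod m = (a - t0) mod m" by simp
    have "(t0 + (a - t0) mod m) mod m = a mod m" by (simp add: mod_add_right_eq)
    hence e2: "f (t0 + (a - t0) mod m) = f a" using cyc_eq[OF c] by blast
    show ?thesis unfolding h_def g_def using e1 e2 by simp
  qed
  have A: "\<forall>t. 0 \<le> g t \<and> g t < n" unfolding g_def using rg np by simp
  have B: "\<forall>a b. g a = g b \<longleftrightarrow> a mod m = b mod m"
  proof (intro allI iffI)
    fix a b assume "a mod m = b mod m"
    hence "(a - t0) mod m = (b - t0) mod m" by (metis mod_diff_left_eq)
    thus "g a = g b" using gh[of a] gh[of b] by simp
  next
    fix a b assume e: "g a = g b"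
    let ?xa = "(a - t0) mod m" and ?xb = "(b - t0) mod m"
    have r: "0 \<le> ?xa" "?xa < m" "0 \<le> ?xb" "?xb < m" using mp by auto
    have "?xa = ?xb"
    proof (rule ccontr)
      assume "?xa \<noteq> ?xb"
      hence "?xa < ?xb \<or> ?xb < ?xa" by linarith
      moreover have "h ?xa = h ?xb" using e gh[of a] gh[of b] by simp
      ultimately show False using chain_mono[OF hch, of ?xa ?xb] chain_mono[OF hch, of ?xb ?xa] r by auto
    qed
    hence "m dvd (a - t0) - (b - t0)" by (simp only: mod_eq_dvd_iff)
    thus "a mod m = b mod m" by (simp add: mod_eq_dvd_iff)
  qed
  have C: "\<exists>r. \<forall>t\<in>{0..<m-1}. g (r+t) < g (r+t+1)"
  proof (intro exI ballI)
    fix t assume "t \<in> {0..<m-1}"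
    hence "h t < h (t+1)" using hch by blast
    thus "g (t0+t) < g (t0+t+1)" unfolding h_def by (simp only: add.assoc)
  qed
  show ?thesis using A B C unfolding cyc_def g_def by blast
qed

lemma condlem:
  fixes m t t0 k :: int
  assumes "odd m" "m > 0" "k \<le> m"
  shows "(\<exists>s\<in>{0..<k}. (1 + 2*t) mod m = (1 + 2*t0 + 2*s) mod m) \<longleftrightarrow> (t - t0) mod m < k"
proof
  assume "\<exists>s\<in>{0..<k}. (1 + 2*t) mod m = (1 + 2*t0 + 2*s) mod m"
  then obtain s where s: "s \<in> {0..<k}" "(1 + 2*t) mod m = (1 + 2*(t0 + s)) mod m"
    by (auto simp: algebra_simps)
  hence "t mod m = (t0 + s) mod m" using inj2 assms(1) by blast
  hence "(t - t0) mod m = s mod m" by (metis add_diff_cancel_left' mod_diff_left_eq)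
  also have "\<dots> = s" using s assms by simp
  finally show "(t - t0) mod m < k" using s by simp
next
  assume h: "(t - t0) mod m < k"
  define s where "s = (t - t0) mod m"
  have "(t0 + s) mod m = t mod m" unfolding s_def by (simp add: mod_add_right_eq)
  hence "(1 + 2*(t0+s)) mod m = (1 + 2*t) mod m" using cong_mod by metis
  moreover have "1 + 2*(t0+s) = 1 + 2*t0 + 2*s" by simp
  ultimately have eq: "(1 + 2*t) mod m = (1 + 2*t0 + 2*s) mod m" by metis
  moreover have "s \<in> {0..<k}" using h assms unfolding s_def by simp
  ultimately show "\<exists>s\<in>{0..<k}. (1 + 2*t) mod m = (1 + 2*t0 + 2*s) mod m" by blast
qed

lemma ar1:
  fixes x j d n :: int
  shows "(((x + (1 - j)) mod n + d) mod n + (j - 1)) mod n = (x + d) mod n"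
proof -
  have "(((x + (1 - j)) mod n + d) mod n + (j - 1)) mod n = ((x + (1 - j)) mod n + d + (j - 1)) mod n"
    by (rule mod_add_left_eq)
  also have "\<dots> = ((x + (1 - j)) mod n + (d + (j - 1))) mod n" by (simp only: add.assoc)
  also have "\<dots> = ((x + (1 - j)) + (d + (j - 1))) mod n" by (rule mod_add_left_eq)
  also have "(x + (1 - j)) + (d + (j - 1)) = x + d" by simp
  finally show ?thesis .
qed

lemma ar2:
  fixes x j n :: int
  assumes "0 \<le> x" "x < n"
  shows "((x + (1 - j)) mod n + (j - 1)) mod n = x"
proof -
  have "((x + (1 - j)) mod n + (j - 1)) mod n = ((x + (1 - j)) + (j - 1)) mod n"
    by (rule mod_add_left_eq)
  also have "(x + (1 - j)) + (j - 1) = x" by simp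
  finally show ?thesis using assms by simp
qed

lemma rotG:
  fixes x y c n :: int
  assumes "0 \<le> x" "x < n" "(x + c) mod n = ((y + c) mod n + 1) mod n"
  shows "x = (y + 1) mod n"
proof -
  have "((y + c) mod n + 1) mod n = (y + c + 1) mod n" by (rule mod_add_left_eq)
  hence "(x + c) mod n = (y + c + 1) mod n" using assms(3) by simp
  hence "n dvd (x + c) - (y + c + 1)" by (simp only: mod_eq_dvd_iff)
  moreover have "(x + c) - (y + c + 1) = x - (y+1)" by simp
  ultimately have "n dvd x - (y+1)" by simp
  hence "x mod n = (y + 1) mod n" by (simp only: mod_eq_dvd_iff)
  thus ?thesis using assms by simp
qed

theorem lemma3p8:
  fixes l :: nat and n :: int and w :: "int \<Rightarrow> int"
  assumes "l \<ge> 1"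
    and "semi_valid n (2 * int l + 1) w"
    and "\<forall>i. \<not> consecutive n (2 * int l + 1) w i (2 * int l + 1)"
  shows "\<exists>i k. 1 \<le> k \<and> k \<le> int l \<and> consecutive n (2 * int l + 1) w i k
           \<and> semi_valid n (2 * int l + 1) (shifted n (2 * int l + 1) w i k (-1))
           \<and> semi_valid n (2 * int l + 1) (shifted n (2 * int l + 1) w i k 1)"
proof -
  define L where "L = int l"
  define m where "m = 2 * L + 1"
  have L1: "L \<ge> 1" using assms(1) unfolding L_def by simp
  have mp: "m > 0" and odd: "odd m" unfolding m_def using L1 by auto
  define f where "f = U m w"
  have fU: "f t = w ((1 + 2*t) mod m)" for t unfolding f_def U_def by simp
  have c: "cyc n m f" using sv_iff[of L n w] assms(2) L1 unfolding f_def m_def L_def by simp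
  have np: "n > 0" using cyc_npos[OF c] .
  have rg: "0 \<le> f z \<and> f z < n" for z using cyc_rng[OF c] .
  define G where "G = (\<lambda>t. f (t+1) \<noteq> (f t + 1) mod n)"
  have consec: "consecutive n m w (1 + 2*t0) K" if "\<forall>s\<in>{0..<K}. f (t0+s) = (f t0 + s) mod n" for t0 K
    unfolding consecutive_def
  proof (intro exI ballI)
    fix s assume s: "s \<in> {0..<K}"
    have "1 + 2*t0 + 2*s = 1 + 2*(t0+s)" by simp
    hence "w ((1 + 2*t0 + 2*s) mod m) = f (t0+s)" using fU[of "t0+s"] by metis
    thus "w ((1 + 2*t0 + 2*s) mod m) = (f t0 + s) mod n" using that s by simp
  qed
  have per: "\<forall>t. G (t + (2*L+1)) = G t"
  proof
    fix t
    have e1: "f (t + m) = f t" by (rule cyc_eq[OF c]) simp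
    have e2: "f (t + m + 1) = f (t + 1)"
    proof (rule cyc_eq[OF c])
      have "t + m + 1 = (t + 1) + m" by simp
      thus "(t + m + 1) mod m = (t + 1) mod m" by (metis mod_add_self2)
    qed
    have e3: "t + (2*L+1) = t + m" "t + (2*L+1) + 1 = t + m + 1" unfolding m_def by simp_all
    show "G (t + (2*L+1)) = G t" unfolding G_def e3 e1 e2 ..
  qed
  have nc: "\<forall>t0. \<not> (\<forall>s\<in>{0..<2*L}. \<not> G (t0+s))"
  proof (intro allI notI)
    fix t0 assume h: "\<forall>s\<in>{0..<2*L}. \<not> G (t0+s)"
    have "\<forall>s\<in>{0..<m-1}. f (t0+s+1) = (f (t0+s) + 1) mod n" using h unfolding G_def m_def by simp
    hence "\<forall>s\<in>{0..<m}. f (t0+s) = (f t0 + s) mod n" using run[of m f t0 n] rg by blast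
    hence "consecutive n m w (1 + 2*t0) m" using consec by blast
    thus False using assms(3) unfolding m_def L_def by blast
  qed
  obtain t0 k where k1: "1 \<le> k" and kL: "k \<le> L" and Ga: "G (t0 - 1)" and Gb: "G (t0 + k - 1)"
    and ng: "\<forall>s\<in>{0..<k-1}. \<not> G (t0+s)"
    using gaps[OF L1 per nc] by blast
  define j where "j = f t0"
  have blk: "\<forall>s\<in>{0..<k}. f (t0+s) = (j + s) mod n"
  proof -
    have "\<forall>s\<in>{0..<k-1}. f (t0+s+1) = (f (t0+s) + 1) mod n" using ng unfolding G_def by simp
    thus ?thesis using run[of k f t0 n] rg unfolding j_def by blast
  qed
  have CON: "consecutive n m w (1 + 2*t0) k" using consec blk unfolding j_def by blast
  define f2 where "f2 = (\<lambda>t. (f t + (1 - j)) mod n)"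
  have c2: "cyc n m f2" unfolding f2_def using rot[OF c mp] .
  have rg2: "0 \<le> f2 z \<and> f2 z < n" for z using cyc_rng[OF c2] .
  have blk2: "f2 (t0+s) = (s + 1) mod n" if "s \<in> {0..<k}" for s
  proof -
    have "f2 (t0+s) = ((j + s) mod n + (1 - j)) mod n" unfolding f2_def using blk that by simp
    also have "\<dots> = (j + s + (1 - j)) mod n" by (rule mod_add_left_eq)
    also have "j + s + (1 - j) = s + 1" by simp
    finally show ?thesis .
  qed
  have G2: "f2 (t+1) \<noteq> (f2 t + 1) mod n" if "G t" for t
  proof
    assume "f2 (t+1) = (f2 t + 1) mod n"
    hence "f (t+1) = (f t + 1) mod n" using rotG[of "f (t+1)" n "1 - j" "f t"] rg unfolding f2_def by blast
    thus False using that unfolding G_def by simp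
  qed
  have Ga2: "f2 t0 \<noteq> (f2 (t0-1) + 1) mod n" using G2[OF Ga] by simp
  have Gb2: "f2 (t0+k) \<noteq> (f2 (t0+k-1) + 1) mod n" using G2[OF Gb] by simp
  have f2t0: "f2 t0 = 1 mod n" using blk2[of 0] k1 by simp
  have n0: "\<forall>a. f2 a \<noteq> 0"
  proof (intro allI notI)
    fix a assume a: "f2 a = 0"
    have "f2 t0 = (f2 a + 1) mod n" using a f2t0 by simp
    hence "f2 (a+1) = (f2 a + 1) mod n" using succ[OF c2 mp] by blast
    hence "f2 (a+1) = f2 t0" using a f2t0 by simp
    hence "(a+1) mod m = t0 mod m" using cyc_eq2[OF c2] by blast
    hence "a mod m = (t0 - 1) mod m" by (metis add_diff_cancel_right' mod_diff_left_eq)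
    hence "f2 (t0 - 1) = 0" using cyc_eq[OF c2] a by metis
    thus False using Ga2 f2t0 by simp
  qed
  have kn: "k < n"
  proof (rule ccontr)
    assume "\<not> k < n"
    hence "n - 1 \<in> {0..<k}" using np by simp
    hence "f2 (t0 + (n-1)) = 0" using blk2 by simp
    thus False using n0 by blast
  qed
  have blk3: "\<forall>s\<in>{0..<k}. f2 (t0+s) = s + 1" using blk2 kn by simp
  have nk: "\<forall>a. f2 a \<noteq> k + 1"
  proof (intro allI notI)
    fix a assume a: "f2 a = k + 1"
    hence kn1: "k + 1 < n" using rg2[of a] by simp
    have "k - 1 \<in> {0..<k}" using k1 by simp
    hence "f2 (t0 + (k-1)) = k" using blk3 by force
    hence e: "f2 (t0 + k - 1) = k" by (simp add: algebra_simps)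
    hence "f2 a = (f2 (t0 + k - 1) + 1) mod n" using a kn1 k1 by simp
    hence "f2 (t0 + k - 1 + 1) = (f2 (t0 + k - 1) + 1) mod n" using succ[OF c2 mp] by blast
    thus False using Gb2 by simp
  qed
  have km: "k \<le> m - 1" using kL L1 unfolding m_def by simp
  have SV: "semi_valid n m (shifted n m w (1 + 2*t0) k d)" if d: "-1 \<le> d" "d \<le> 1" for d
  proof -
    define g where "g = (\<lambda>t. if (t - t0) mod m < k then (f2 t + d) mod n else f2 t)"
    have cg: "cyc n m g" unfolding g_def using shift_ok[OF c2 mp k1 km blk3 n0 nk d] .
    have cg2: "cyc n m (\<lambda>t. (g t + (j - 1)) mod n)" using rot[OF cg mp] .
    have "U m (shifted n m w (1 + 2*t0) k d) = (\<lambda>t. (g t + (j - 1)) mod n)"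
    proof
      fix t
      have cond: "(\<exists>s\<in>{0..<k}. (1 + 2*t) mod m = (1 + 2*t0 + 2*s) mod m) \<longleftrightarrow> (t - t0) mod m < k"
        using condlem[OF odd mp] km by simp
      show "U m (shifted n m w (1 + 2*t0) k d) t = (g t + (j - 1)) mod n"
      proof (cases "(t - t0) mod m < k")
        case True
        thus ?thesis unfolding U_def shifted_def g_def f2_def using cond ar1[of "f t" j n d] fU by simp
      next
        case False
        thus ?thesis unfolding U_def shifted_def g_def f2_def using cond ar2[of "f t" n j] rg[of t] fU by simp
      qed
    qed
    hence "cyc n m (U m (shifted n m w (1 + 2*t0) k d))" using cg2 by simp
    thus ?thesis using sv_iff[of L n] L1 unfolding m_def by simp
  qed
  show ?thesis
    using k1 kL CON SV[of "-1"] SV[of 1] unfolding m_def L_def by auto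
qed

end
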